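(* Let $A=(A,\wedge,\vee,\cdot,\to,1)$ be an algebra of type $(2,2,2,2,0)$ satisfying conditions (1)–(8) below. Then $A$ satisfies condition (9) if and only if for all $a,b,c,d\in A$, $(a\to b)\cdot(c\to d)\le (a\cdot c)\to(b\cdot d)$.
   Context: Conditions, for all $a,b,c\in A$: (1) $(A,\wedge,\vee)$ is a distributive lattice (with order $\le$); (2) $1$ is its largest element; (3) $(A,\cdot,1)$ is a commutative monoid; (4) $(a\to b)\wedge(a\to c)=a\to(b\wedge c)$; (5) $(a\to c)\wedge(b\to c)=(a\vee b)\to c$; (6) $a\to a=1$; (7) $(a\vee b)\cdot c=(a\cdot c)\vee(b\cdot c)$; (8) $(a\to b)\cdot(b\to c)\le a\to c$; (9) $a\to b\le (a\cdot c)\to(b\cdot c)$. *)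

theory Defs
  imports Main
begin

definition lat_le :: "('a \<Rightarrow> 'a \<Rightarrow> 'a) \<Rightarrow> 'a \<Rightarrow> 'a \<Rightarrow> bool" where
  "lat_le meet a b \<longleftrightarrow> meet a b = a"

definition is_distrib_lattice :: "('a \<Rightarrow> 'a \<Rightarrow> 'a) \<Rightarrow> ('a \<Rightarrow> 'a \<Rightarrow> 'a) \<Rightarrow> bool" where
  "is_distrib_lattice meet join \<longleftrightarrow>
     (\<forall>a b c. meet (meet a b) c = meet a (meet b c)) \<and>
     (\<forall>a b c. join (join a b) c = join a (join b c)) \<and>
     (\<forall>a b. meet a b = meet b a) \<and>
     (\<forall>a b. join a b = join b a) \<and>
     (\<forall>a b. meet a (join a b) = a) \<and>
     (\<forall>a b. join a (meet a b) = a) \<and>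
     (\<forall>a b c. meet a (join b c) = join (meet a b) (meet a c))"

definition conds_1_to_8 ::
  "('a \<Rightarrow> 'a \<Rightarrow> 'a) \<Rightarrow> ('a \<Rightarrow> 'a \<Rightarrow> 'a) \<Rightarrow> ('a \<Rightarrow> 'a \<Rightarrow> 'a) \<Rightarrow> ('a \<Rightarrow> 'a \<Rightarrow> 'a) \<Rightarrow> 'a \<Rightarrow> bool" where
  "conds_1_to_8 meet join mult imp one \<longleftrightarrow>
     is_distrib_lattice meet join \<and>
     (\<forall>a. lat_le meet a one) \<and>
     (\<forall>a b c. mult (mult a b) c = mult a (mult b c)) \<and>
     (\<forall>a b. mult a b = mult b a) \<and>
     (\<forall>a. mult a one = a) \<and>
     (\<forall>a b c. meet (imp a b) (imp a c) = imp a (meet b c)) \<and>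
     (\<forall>a b c. meet (imp a c) (imp b c) = imp (join a b) c) \<and>
     (\<forall>a. imp a a = one) \<and>
     (\<forall>a b c. mult (join a b) c = join (mult a c) (mult b c)) \<and>
     (\<forall>a b c. lat_le meet (mult (imp a b) (imp b c)) (imp a c))"

definition cond_9 ::
  "('a \<Rightarrow> 'a \<Rightarrow> 'a) \<Rightarrow> ('a \<Rightarrow> 'a \<Rightarrow> 'a) \<Rightarrow> ('a \<Rightarrow> 'a \<Rightarrow> 'a) \<Rightarrow> bool" where
  "cond_9 meet mult imp \<longleftrightarrow>
     (\<forall>a b c. lat_le meet (imp a b) (imp (mult a c) (mult b c)))"

end

theory Submission
  imports Defs
begin

theorem lemma2p7:
  fixes meet join mult imp :: "'a \<Rightarrow> 'a \<Rightarrow> 'a" and one :: 'a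
  assumes "conds_1_to_8 meet join mult imp one"
  shows "cond_9 meet mult imp \<longleftrightarrow>
    (\<forall>a b c d. lat_le meet (mult (imp a b) (imp c d)) (imp (mult a c) (mult b d)))"
proof -
  have L: "is_distrib_lattice meet join" and M1: "\<And>a b c. mult (mult a b) c = mult a (mult b c)"
    and MC: "\<And>a b. mult a b = mult b a" and M0: "\<And>a. mult a one = a"
    and II: "\<And>a. imp a a = one"
    and D7: "\<And>a b c. mult (join a b) c = join (mult a c) (mult b c)"
    and C8: "\<And>a b c. lat_le meet (mult (imp a b) (imp b c)) (imp a c)"
    using assms unfolding conds_1_to_8_def by auto
  have ma: "\<And>a b c. meet (meet a b) c = meet a (meet b c)"
    and mc: "\<And>a b. meet a b = meet b a" and jc: "\<And>a b. join a b = join b a"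
    and ab1: "\<And>a b. meet a (join a b) = a" and ab2: "\<And>a b. join a (meet a b) = a"
    using L unfolding is_distrib_lattice_def by auto
  have tr: "lat_le meet x z" if "lat_le meet x y" "lat_le meet y z" for x y z
    using that unfolding lat_le_def by (metis ma)
  have lj: "join x y = y" if "lat_le meet x y" for x y
    using that unfolding lat_le_def by (metis mc jc ab2)
  have mono: "lat_le meet (mult x z) (mult y z)" if "lat_le meet x y" for x y z
  proof -
    have "mult y z = join (mult x z) (mult y z)" using D7 lj[OF that] by metis
    then show ?thesis unfolding lat_le_def by (metis ab1)
  qed
  have mono2: "lat_le meet (mult x y) (mult x' y')" if "lat_le meet x x'" "lat_le meet y y'" for x y x' y'
  proof -
    have "lat_le meet (mult x' y) (mult x' y')" using mono[OF that(2), of x'] MC by metis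
    then show ?thesis using tr[OF mono[OF that(1), of y]] by blast
  qed
  show ?thesis
  proof
    assume c9: "cond_9 meet mult imp"
    show "\<forall>a b c d. lat_le meet (mult (imp a b) (imp c d)) (imp (mult a c) (mult b d))"
    proof (intro allI)
      fix a b c d
      have 1: "lat_le meet (imp a b) (imp (mult a c) (mult b c))" using c9 unfolding cond_9_def by auto
      have 2: "lat_le meet (imp c d) (imp (mult b c) (mult b d))" using c9 MC unfolding cond_9_def by metis
      show "lat_le meet (mult (imp a b) (imp c d)) (imp (mult a c) (mult b d))"
        using tr[OF mono2[OF 1 2] C8] .
    qed
  next
    assume h: "\<forall>a b c d. lat_le meet (mult (imp a b) (imp c d)) (imp (mult a c) (mult b d))"
    show "cond_9 meet mult imp" unfolding cond_9_def
    proof (intro allI)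
      fix a b c
      show "lat_le meet (imp a b) (imp (mult a c) (mult b c))"
        using h[rule_format, of a b c c] II M0 by metis
    qed
  qed
qed

end
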